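(* Let $p(\cdot)\in\mathcal P^{\log}_\pm(\mathbb B)$, $k\in(0,\tfrac12)$ and $w\in B_{p(\cdot)}$. There is a constant $C>0$ such that for every non-negative measurable $g$ with $\|g\|_{p(\cdot),w}=1$ and every $z\in\mathbb B$, $$\big(R^\alpha_kg(z)\big)^{p(z)}\le C\big(R^\alpha_k(g^{p(\cdot)})(z)+1\big).$$
   Context: $\mathbb B$ unit ball of $\mathbb C^n$, $\alpha>0$, $d\mu_\alpha(z)=(1-|z|^2)^{\alpha-1}d\mu(z)$. Pseudo-distance $d(z,\zeta)=\big||z|-|\zeta|\big|+\big|1-\frac{\langle z,\zeta\rangle}{|z||\zeta|}\big|$ ($z,\zeta\ne0$), $d(z,\zeta)=|z|+|\zeta|$ otherwise; pseudo-balls $B(z,r)=\{\zeta:d(z,\zeta)<r\}$; $\mathcal B$ = pseudo-balls $B(z,r)$ with $r>1-|z|$. $\mathcal P^{\log}_\pm(\mathbb B)$: measurable $p$ with $\operatorname{ess\,inf}p>1$ and $|p(z)-p(\zeta)|\le c/\ln(e+1/d(z,\zeta))$ for some $c$, all $z\ne\zeta$; $1/p+1/p'=1$. For a weight $v$ (or $v\equiv1$, written $\|\cdot\|_{p(\cdot)}$): $\|f\|_{p(\cdot),v}=\inf\{\lambda>0:\int|f/\lambda|^{p(z)}v\,d\mu_\alpha\le1\}$. $w\in B_{p(\cdot)}$ iff $\sup_{B\in\mathcal B}\frac1{\mu_\alpha(B)}\|w^{1/p(\cdot)}\chi_B\|_{p(\cdot)}\|w^{-1/p(\cdot)}\chi_B\|_{p'(\cdot)}<\infty$.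 $B^k(z)=\{\zeta\in\mathbb B:d(z,\zeta)<k(1-|z|)\}$, $R^\alpha_kf(z)=\frac1{\mu_\alpha(B^k(z))}\int_{B^k(z)}f\,d\mu_\alpha$. *)

theory Defs
  imports "HOL-Analysis.Analysis"
begin

type_synonym 'n cvec = "complex ^ 'n"

definition unitB :: "('n::finite) cvec set" where
  "unitB = ball 0 1"

definition hinner :: "('n::finite) cvec \<Rightarrow> 'n cvec \<Rightarrow> complex" where
  "hinner z y = (\<Sum>i\<in>UNIV. z $ i * cnj (y $ i))"

definition pdist :: "('n::finite) cvec \<Rightarrow> 'n cvec \<Rightarrow> real" where
  "pdist z y = (if z \<noteq> 0 \<and> y \<noteq> 0
     then \<bar>norm z - norm y\<bar> + cmod (1 - hinner z y / complex_of_real (norm z * norm y))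
     else norm z + norm y)"

definition pball :: "('n::finite) cvec \<Rightarrow> real \<Rightarrow> 'n cvec set" where
  "pball z r = {y \<in> unitB. pdist z y < r}"

text \<open>dmu: normalized Lebesgue (volume) measure on the unit ball;
  dmu_alpha = (1-|z|^2)^(alpha-1) dmu.\<close>
definition mu_alpha :: "real \<Rightarrow> ('n::finite) cvec measure" where
  "mu_alpha \<alpha> = density lborel
     (\<lambda>z. ennreal (indicator unitB z * (1 - (norm z)\<^sup>2) powr (\<alpha> - 1)
                   / measure lborel (unitB :: 'n cvec set)))"

text \<open>Weighted variable-exponent Luxemburg norm (value \<infinity> if no admissible lambda).\<close>
definition vnorm :: "real \<Rightarrow> (('n::finite) cvec \<Rightarrow> real) \<Rightarrow> ('n cvec \<Rightarrow> real)
                     \<Rightarrow> ('n cvec \<Rightarrow> real) \<Rightarrow> ennreal" where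
  "vnorm \<alpha> p v f = Inf {ennreal t | t. t > 0 \<and>
      (\<integral>\<^sup>+ z. ennreal (\<bar>f z / t\<bar> powr p z * v z) \<partial>mu_alpha \<alpha>) \<le> 1}"

definition Plog :: "real \<Rightarrow> (('n::finite) cvec \<Rightarrow> real) \<Rightarrow> bool" where
  "Plog \<alpha> p \<longleftrightarrow> p \<in> borel_measurable lborel
     \<and> (\<exists>p0 > 1. AE z in mu_alpha \<alpha>. p z \<ge> p0)
     \<and> (\<exists>c. \<forall>z\<in>unitB. \<forall>y\<in>unitB. z \<noteq> y \<longrightarrow>
             \<bar>p z - p y\<bar> \<le> c / ln (exp 1 + 1 / pdist z y))"

definition conj_exp :: "real \<Rightarrow> real" where
  "conj_exp q = q / (q - 1)"

definition weight :: "real \<Rightarrow> (('n::finite) cvec \<Rightarrow> real) \<Rightarrow> bool" where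
  "weight \<alpha> w \<longleftrightarrow> w \<in> borel_measurable lborel \<and> (\<forall>z. w z \<ge> 0)
     \<and> (AE z in mu_alpha \<alpha>. w z > 0)"

definition Bp_class :: "real \<Rightarrow> (('n::finite) cvec \<Rightarrow> real) \<Rightarrow> ('n cvec \<Rightarrow> real) \<Rightarrow> bool" where
  "Bp_class \<alpha> p w \<longleftrightarrow> weight \<alpha> w \<and> (\<exists>M. \<forall>z\<in>unitB. \<forall>r. r > 1 - norm z \<longrightarrow>
      (1 / emeasure (mu_alpha \<alpha>) (pball z r))
       * vnorm \<alpha> p (\<lambda>_. 1) (\<lambda>y. w y powr (1 / p y) * indicator (pball z r) y)
       * vnorm \<alpha> (\<lambda>y. conj_exp (p y)) (\<lambda>_. 1)
              (\<lambda>y. w y powr (- 1 / p y) * indicator (pball z r) y)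
       \<le> ennreal M)"

definition Bk :: "real \<Rightarrow> ('n::finite) cvec \<Rightarrow> 'n cvec set" where
  "Bk k z = {y \<in> unitB. pdist z y < k * (1 - norm z)}"

definition Rk :: "real \<Rightarrow> real \<Rightarrow> (('n::finite) cvec \<Rightarrow> real) \<Rightarrow> 'n cvec \<Rightarrow> ennreal" where
  "Rk \<alpha> k f z = (\<integral>\<^sup>+ y \<in> Bk k z. ennreal (f y) \<partial>mu_alpha \<alpha>) / emeasure (mu_alpha \<alpha>) (Bk k z)"

end

theory Submission
  imports Defs
begin


lemma unitB_vol: "measure lborel (unitB :: ('n::finite) cvec set) = unit_ball_vol (DIM('n cvec))"
  unfolding unitB_def by (simp add: measure_def emeasure_ball)

lemma unitB_vol_pos: "measure lborel (unitB :: ('n::finite) cvec set) > 0"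
  unfolding unitB_vol by simp

lemma unitB_sets[measurable]: "(unitB :: ('n::finite) cvec set) \<in> sets borel"
  unfolding unitB_def by simp

lemma sets_mu[measurable_cong]: "sets (mu_alpha a :: ('n::finite) cvec measure) = sets borel"
  unfolding mu_alpha_def by simp

lemma space_mu: "space (mu_alpha a :: ('n::finite) cvec measure) = UNIV"
  unfolding mu_alpha_def by simp

definition dens :: "real \<Rightarrow> ('n::finite) cvec \<Rightarrow> real" where
  "dens a z = indicator unitB z * (1 - (norm z)\<^sup>2) powr (a - 1) / measure lborel (unitB :: 'n cvec set)"

lemma dens_meas[measurable]: "dens a \<in> borel_measurable borel"
  unfolding dens_def by measurable

lemma dens_nonneg: "dens a z \<ge> 0"
  unfolding dens_def by (auto simp: indicator_def)

lemma mu_density: "mu_alpha a = density lborel (\<lambda>z. ennreal (dens a z))"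
  unfolding mu_alpha_def dens_def by simp

lemma emeasure_mu: "A \<in> sets borel \<Longrightarrow> emeasure (mu_alpha a) A = (\<integral>\<^sup>+ x. ennreal (dens a x) * indicator A x \<partial>lborel)"
  unfolding mu_density by (subst emeasure_density) auto

lemma one_minus_pow_le: "0 \<le> (r::real) \<Longrightarrow> r \<le> 1 \<Longrightarrow> 1 - r ^ n \<le> real n * (1 - r)"
proof (induction n)
  case (Suc n)
  have "r ^ n * (1 - r) \<le> 1 - r" using Suc.prems by (intro mult_left_le_one_le) (auto simp: power_le_one)
  then show ?case using Suc by (simp add: algebra_simps)
qed simp

lemma mu_unitB_finite: assumes "a > 0" shows "emeasure (mu_alpha a) (unitB :: ('n::finite) cvec set) < \<infinity>"
proof -
  define V where "V = measure lborel (unitB :: 'n cvec set)"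
  define D where "D = DIM('n cvec)"
  have V: "V > 0" unfolding V_def by (rule unitB_vol_pos)
  have VD: "V = unit_ball_vol D" unfolding V_def D_def by (rule unitB_vol)
  have eq: "emeasure (mu_alpha a) (unitB :: 'n cvec set)
      = (\<integral>\<^sup>+ x. ennreal ((1 - (norm x)\<^sup>2) powr (a - 1) / V) * indicator (unitB :: 'n cvec set) x \<partial>lborel)"
    by (subst emeasure_mu) (auto intro!: nn_integral_cong simp: dens_def V_def indicator_def)
  show ?thesis
  proof (cases "a \<ge> 1")
    case True
    have "emeasure (mu_alpha a) (unitB :: 'n cvec set) \<le> (\<integral>\<^sup>+ x. ennreal (1 / V) * indicator (unitB :: 'n cvec set) x \<partial>lborel)"
      unfolding eq
    proof (intro nn_integral_mono)
      fix x :: "'n cvec"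
      show "ennreal ((1 - (norm x)\<^sup>2) powr (a - 1) / V) * indicator unitB x \<le> ennreal (1 / V) * indicator unitB x"
      proof (cases "x \<in> unitB")
        case True
        then have "norm x < 1" by (simp add: unitB_def)
        then have "(1 - (norm x)\<^sup>2) powr (a - 1) \<le> 1" using \<open>a \<ge> 1\<close>
          using powr_mono2[of "a - 1" "1 - (norm x)\<^sup>2" 1] power_le_one[of "norm x" 2] by (simp add: less_imp_le)
        then show ?thesis using True V by (auto intro!: ennreal_leI divide_right_mono)
      qed simp
    qed
    also have "\<dots> = ennreal (1/V) * emeasure lborel (unitB :: 'n cvec set)" by (rule nn_integral_cmult_indicator) simp
    also have "\<dots> < \<infinity>" unfolding unitB_def by (simp add: emeasure_ball ennreal_mult_less_top)
    finally show ?thesis .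
  next
    case False
    define r where "r j = 1 - (1/2::real)^j" for j
    define A where "A j = ball (0::'n cvec) (r (Suc j)) - ball 0 (r j)" for j
    have r01: "0 \<le> r j" "r j \<le> 1" for j unfolding r_def by (auto simp: power_le_one)
    have rmono: "r j \<le> r (Suc j)" for j unfolding r_def by simp
    have Ameas[measurable]: "A j \<in> sets borel" for j unfolding A_def by auto
    have disj: "disjoint_family A"
    proof (rule disjoint_family_on_bisimulation[where f=A], simp_all add: disjoint_family_on_def, intro allI impI)
      fix m n :: nat assume "m \<noteq> n"
      then consider "m < n" | "n < m" by linarith
      then show "A m \<inter> A n = {}"
      proof cases
        case 1
        have "(1/2::real)^n \<le> (1/2)^(Suc m)" using 1 by (intro power_decreasing) auto
        then have "r (Suc m) \<le> r n" unfolding r_def by simp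
        then show ?thesis unfolding A_def by auto
      next
        case 2
        have "(1/2::real)^m \<le> (1/2)^(Suc n)" using 2 by (intro power_decreasing) auto
        then have "r (Suc n) \<le> r m" unfolding r_def by simp
        then show ?thesis unfolding A_def by auto
      qed
    qed
    have UA: "(\<Union>j. A j) = unitB"
    proof
      show "(\<Union>j. A j) \<subseteq> unitB" unfolding A_def unitB_def using r01 by (auto, meson less_le_trans)
    next
      show "unitB \<subseteq> (\<Union>j. A j)"
      proof
        fix x :: "'n cvec" assume "x \<in> unitB"
        then have nx: "norm x < 1" by (simp add: unitB_def)
        obtain j where j: "(1/2::real)^j < 1 - norm x"
          using real_arch_pow_inv[of "1 - norm x" "1/2"] nx by auto
        then have ex: "\<exists>j. norm x < r j" unfolding r_def by (intro exI[of _ j]) auto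
        define i where "i = (LEAST j. norm x < r j)"
        have i1: "norm x < r i" unfolding i_def by (rule LeastI_ex[OF ex])
        have i0: "i \<noteq> 0" using i1 unfolding r_def by (metis norm_not_less_zero power_0 right_minus_eq)
        then obtain l where l: "i = Suc l" by (cases i) auto
        have "\<not> norm x < r l" using not_less_Least[of l "\<lambda>j. norm x < r j"] l unfolding i_def by simp
        then have "x \<in> A l" unfolding A_def using i1 l by auto
        then show "x \<in> (\<Union>j. A j)" by blast
      qed
    qed
    define K where "K j = ((1/2::real)^(Suc j)) powr (a - 1) / V * (V * D * (1/2)^j)" for j
    have bound: "(\<integral>\<^sup>+ x. ennreal ((1 - (norm x)\<^sup>2) powr (a - 1) / V) * indicator (A j) x \<partial>lborel) \<le> ennreal (K j)" for j
    proof -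
      have "(\<integral>\<^sup>+ x. ennreal ((1 - (norm x)\<^sup>2) powr (a - 1) / V) * indicator (A j) x \<partial>lborel)
          \<le> (\<integral>\<^sup>+ x. ennreal (((1/2::real)^(Suc j)) powr (a - 1) / V) * indicator (A j) x \<partial>lborel)"
      proof (intro nn_integral_mono)
        fix x :: "'n cvec"
        show "ennreal ((1 - (norm x)\<^sup>2) powr (a - 1) / V) * indicator (A j) x \<le> ennreal (((1/2::real)^(Suc j)) powr (a - 1) / V) * indicator (A j) x"
        proof (cases "x \<in> A j")
          case True
          then have nx: "norm x < 1 - (1/2)^(Suc j)" unfolding A_def r_def by auto
          have "(1/2::real)^(Suc j) \<le> 1 - norm x" using nx by simp
          also have "1 - norm x \<le> 1 - (norm x)\<^sup>2"
          proof -
            have "(0::real) < (1/2)^Suc j" by simp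
            then have "norm x < 1" using nx by linarith
            then have "norm x * norm x \<le> norm x" by (intro mult_left_le_one_le) auto
            then show ?thesis by (simp add: power2_eq_square)
          qed
          finally have "(1 - (norm x)\<^sup>2) powr (a - 1) \<le> ((1/2::real)^(Suc j)) powr (a - 1)"
            using False by (intro powr_mono2') auto
          then show ?thesis using True V by (auto intro!: ennreal_leI divide_right_mono)
        qed simp
      qed
      also have "\<dots> = ennreal (((1/2::real)^(Suc j)) powr (a - 1) / V) * emeasure lborel (A j)" by (rule nn_integral_cmult_indicator) simp
      also have "emeasure lborel (A j) \<le> ennreal (V * D * (1/2)^j)"
      proof -
        have "emeasure lborel (A j) \<le> emeasure lborel (ball (0::'n cvec) 1 - ball 0 (r j))"
          unfolding A_def using r01 by (intro emeasure_mono) (auto, meson less_le_trans)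
        also have "\<dots> = emeasure lborel (ball (0::'n cvec) 1) - emeasure lborel (ball (0::'n cvec) (r j))"
          using r01[of j] by (intro emeasure_Diff) (auto simp: emeasure_ball)
        also have "\<dots> = ennreal (V * (1 - r j ^ D))"
          using r01[of j] V VD by (simp add: emeasure_ball D_def ennreal_minus[symmetric] algebra_simps)
        also have "\<dots> \<le> ennreal (V * D * (1/2)^j)"
        proof (intro ennreal_leI)
          have "1 - r j ^ D \<le> real D * (1 - r j)" using r01 by (rule one_minus_pow_le)
          then show "V * (1 - r j ^ D) \<le> V * D * (1/2)^j" using V unfolding r_def
            by (simp add: mult.assoc)
        qed
        finally show ?thesis .
      qed
      then have "ennreal (((1/2::real)^(Suc j)) powr (a - 1) / V) * emeasure lborel (A j)
          \<le> ennreal (((1/2::real)^(Suc j)) powr (a - 1) / V) * ennreal (V * D * (1/2)^j)"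
        by (intro mult_left_mono) auto
      also have "\<dots> = ennreal (K j)" unfolding K_def using V by (intro ennreal_mult[symmetric]) auto
      finally show ?thesis .
    qed
    have Kform: "K j = D * (1/2) powr (a - 1) * ((1/2) powr a) ^ j" for j
    proof -
      have "((1/2::real)^(Suc j)) powr (a - 1) = ((1/2) powr (a - 1)) ^ Suc j"
      proof -
        have "((1/2::real)^(Suc j)) = (1/2) powr real (Suc j)" by (rule powr_realpow[symmetric]) simp
        then show ?thesis by (simp add: powr_powr powr_power mult.commute powr_add[symmetric] algebra_simps)
      qed
      moreover have c2: "((1/2::real) powr (a - 1)) * (1/2) = (1/2) powr a"
      proof -
        have "(1/2::real) powr (a-1) * (1/2) powr 1 = (1/2) powr (a - 1 + 1)" by (rule powr_add[symmetric])
        then show ?thesis by simp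
      qed
      ultimately have "K j = ((1/2::real) powr (a - 1)) ^ Suc j * D * (1/2)^j"
        unfolding K_def using V by simp
      also have "\<dots> = D * (1/2) powr (a - 1) * (((1/2::real) powr (a - 1)) ^ j * (1/2)^j)"
        by (simp only: power_Suc mult_ac)
      also have "\<dots> = D * (1/2) powr (a - 1) * ((1/2) powr a) ^ j"
        by (simp only: power_mult_distrib[symmetric] c2)
      finally show ?thesis .
    qed
    have summ: "summable K" unfolding Kform
      using assms powr_less_mono2[of a "1/2" 1] by (intro summable_mult summable_geometric) auto
    have "emeasure (mu_alpha a) (unitB :: 'n cvec set)
        = (\<integral>\<^sup>+ x. ennreal ((1 - (norm x)\<^sup>2) powr (a - 1) / V) * indicator (\<Union>j. A j) x \<partial>lborel)"
      unfolding UA by (rule eq)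
    also have "\<dots> = (\<Sum>j. (\<integral>\<^sup>+ x. ennreal ((1 - (norm x)\<^sup>2) powr (a - 1) / V) * indicator (A j) x \<partial>lborel))"
      by (intro nn_integral_disjoint_family disj) auto
    also have "\<dots> \<le> (\<Sum>j. ennreal (K j))" by (intro suminf_le bound) auto
    also have "\<dots> = ennreal (\<Sum>j. K j)"
    proof (rule suminf_ennreal2[OF _ summ])
      fix j show "0 \<le> K j" unfolding K_def using V by auto
    qed
    also have "\<dots> < \<infinity>" by simp
    finally show ?thesis .
  qed
qed

section \<open>Geometry of the pseudo-distance\<close>

lemma hinner_cs: "cmod (hinner a b) \<le> norm a * norm (b :: ('n::finite) cvec)"
proof -
  have "cmod (hinner a b) \<le> (\<Sum>i\<in>UNIV. cmod (a $ i) * cmod (b $ i))"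
    unfolding hinner_def by (rule order_trans[OF norm_sum]) (simp add: norm_mult)
  also have "\<dots> = (\<Sum>i\<in>UNIV. \<bar>cmod (a $ i)\<bar> * \<bar>cmod (b $ i)\<bar>)" by simp
  also have "\<dots> \<le> L2_set (\<lambda>i. cmod (a $ i)) UNIV * L2_set (\<lambda>i. cmod (b $ i)) UNIV"
    by (rule L2_set_mult_ineq)
  also have "\<dots> = norm a * norm b" by (simp add: norm_vec_def)
  finally show ?thesis .
qed

lemma Re_hinner: "Re (hinner x y) = inner x (y :: ('n::finite) cvec)"
  unfolding hinner_def inner_vec_def inner_complex_def by (simp add: Re_sum)

lemma hinner_self: "hinner x x = of_real ((norm (x :: ('n::finite) cvec))\<^sup>2)"
proof -
  have "(norm x)\<^sup>2 = (\<Sum>i\<in>UNIV. (cmod (x $ i))\<^sup>2)"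
    unfolding norm_vec_def L2_set_def by (simp add: sum_nonneg)
  moreover have "x $ i * cnj (x $ i) = complex_of_real ((cmod (x $ i))\<^sup>2)" for i
    by (metis complex_norm_square)
  ultimately show ?thesis unfolding hinner_def
    by (simp add: of_real_sum)
qed

lemma hinner_diff_right: "hinner x (y - w) = hinner x y - hinner x (w :: ('n::finite) cvec)"
  unfolding hinner_def by (simp add: sum_subtractf algebra_simps)

lemma hinner_scaleR_left: "hinner (c *\<^sub>R x) y = of_real c * hinner x (y :: ('n::finite) cvec)"
  unfolding hinner_def vector_scaleR_component by (simp add: sum_distrib_left scaleR_conv_of_real mult_ac)

lemma angle_bound:
  fixes x y :: "('n::finite) cvec"
  assumes "x \<noteq> 0" "y \<noteq> 0"
  shows "cmod (1 - hinner x y / complex_of_real (norm x * norm y)) \<le> 2 * norm (y - x) / norm y"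
proof -
  define P where "P = complex_of_real (norm x * norm y)"
  have P0: "P \<noteq> 0" unfolding P_def using assms by simp
  have "1 - hinner x y / P = (P - hinner x y) / P" using P0 by (simp add: field_simps)
  moreover have "P - hinner x y = of_real (norm x) * of_real (norm y - norm x) + hinner x (x - y)"
    unfolding P_def hinner_diff_right hinner_self by (simp add: algebra_simps power2_eq_square)
  moreover have "cmod (of_real (norm x) * of_real (norm y - norm x) + hinner x (x - y)) \<le> 2 * norm x * norm (y - x)"
  proof -
    have "cmod (of_real (norm x) * of_real (norm y - norm x) + hinner x (x - y))
        \<le> norm x * \<bar>norm y - norm x\<bar> + norm x * norm (x - y)"
    proof -
      have "cmod (complex_of_real (norm y - norm x)) = \<bar>norm y - norm x\<bar>" by (rule norm_of_real)
      moreover have "cmod (hinner x (x - y)) \<le> norm x * norm (x - y)" by (rule hinner_cs)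
      ultimately show ?thesis by (intro order_trans[OF norm_triangle_ineq]) (simp add: norm_mult)
    qed
    also have "\<bar>norm y - norm x\<bar> \<le> norm (y - x)" by (rule norm_triangle_ineq3)
    then have "norm x * \<bar>norm y - norm x\<bar> \<le> norm x * norm (y - x)" by (simp add: mult_left_mono)
    then have "norm x * \<bar>norm y - norm x\<bar> + norm x * norm (x - y) \<le> 2 * norm x * norm (y - x)"
      by (simp add: norm_minus_commute)
    finally show ?thesis .
  qed
  ultimately have "cmod (1 - hinner x y / P) \<le> 2 * norm x * norm (y - x) / cmod P"
    by (simp add: norm_divide divide_right_mono)
  also have "cmod P = norm x * norm y" unfolding P_def norm_of_real by simp
  also have "2 * norm x * norm (y - x) / (norm x * norm y) = 2 * norm (y - x) / norm y"
    using assms by simp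
  finally show ?thesis unfolding P_def .
qed

lemma pdist_zero: "pdist z y = 0 \<Longrightarrow> y = (z :: ('n::finite) cvec)"
proof -
  assume h: "pdist z y = 0"
  show ?thesis
  proof (cases "z \<noteq> 0 \<and> y \<noteq> 0")
    case False
    then show ?thesis using h unfolding pdist_def
      by (auto simp: add_nonneg_eq_0_iff)
  next
    case True
    then have a: "\<bar>norm z - norm y\<bar> = 0" and b: "cmod (1 - hinner z y / complex_of_real (norm z * norm y)) = 0"
      using h unfolding pdist_def by (auto simp: add_nonneg_eq_0_iff)
    from a have ny: "norm y = norm z" by simp
    from b have "hinner z y = complex_of_real (norm z * norm y)" using True by (simp add: field_simps)
    then have "inner z y = norm z * norm z" using ny by (metis Re_hinner Re_complex_of_real)
    moreover have "(norm (z - y))\<^sup>2 = (norm z)\<^sup>2 - 2 * inner z y + (norm y)\<^sup>2"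
      by (simp add: power2_norm_eq_inner inner_diff_left inner_diff_right inner_commute)
    ultimately have "(norm (z - y))\<^sup>2 = 0" using ny by (simp add: power2_eq_square)
    then show ?thesis by simp
  qed
qed

lemma ball_in_pball:
  fixes z :: "('n::finite) cvec"
  assumes z: "norm z < 1" and e: "0 < e" "e \<le> 1 - norm z"
  obtains x where "\<And>y. y \<in> ball x (e\<^sup>2 / 64) \<Longrightarrow> pdist z y < e \<and> norm y < norm z + e / 2 + e\<^sup>2 / 64 \<and> norm y < 1"
proof -
  obtain e1 :: "'n cvec" where e1: "norm e1 = 1" using vector_choose_size[of 1] by auto
  define u where "u = (if z = 0 then e1 else (1 / norm z) *\<^sub>R z)"
  have nu: "norm u = 1" unfolding u_def using e1 by auto
  define x where "x = (norm z + e / 2) *\<^sub>R u"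
  have nx: "norm x = norm z + e / 2" unfolding x_def using nu e by simp
  have e1': "e \<le> 1" using e z by (smt (verit) norm_ge_zero)
  have "e\<^sup>2 / 64 \<le> e / 64" using e e1' by (simp add: power2_eq_square mult_left_le_one_le)
  note d = this
  show ?thesis
  proof (rule that)
    fix y assume y: "y \<in> ball x (e\<^sup>2 / 64)"
    then have dy: "norm (y - x) < e\<^sup>2 / 64" by (simp add: dist_norm norm_minus_commute)
    have ny1: "norm y \<le> norm x + norm (y - x)" by (metis norm_triangle_sub)
    have ny2: "norm x \<le> norm y + norm (y - x)" by (metis norm_minus_commute norm_triangle_sub add.commute)
    have nyb: "norm y < norm z + e / 2 + e\<^sup>2 / 64" using ny1 nx dy by linarith
    have nylow: "norm y > e / 4" using ny2 nx dy d e norm_ge_zero[of z] by linarith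
    have y0: "y \<noteq> 0" using nylow e by auto
    have pd: "pdist z y < e"
    proof (cases "z = 0")
      case True
      then show ?thesis unfolding pdist_def using nyb d e by simp
    next
      case False
      have xeq: "x = ((norm z + e/2) / norm z) *\<^sub>R z" unfolding x_def u_def using False by simp
      have "norm x > 0" using nx e norm_ge_zero[of z] by linarith
      then have x0: "x \<noteq> 0" by auto
      define c where "c = (norm z + e/2) / norm z"
      have "norm z > 0" using False by simp
      then have c0: "c > 0" unfolding c_def using e by (smt (verit) divide_pos_pos)
      have ang: "hinner z y / complex_of_real (norm z * norm y) = hinner x y / complex_of_real (norm x * norm y)"
      proof -
        have "hinner x y / complex_of_real (norm x * norm y)
            = (complex_of_real c * hinner z y) / (complex_of_real c * complex_of_real (norm z * norm y))"
          unfolding xeq c_def[symmetric] hinner_scaleR_left using c0 by simp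
        also have "\<dots> = hinner z y / complex_of_real (norm z * norm y)"
          using c0 by (intro mult_divide_mult_cancel_left) auto
        finally show ?thesis by simp
      qed
      have "cmod (1 - hinner x y / complex_of_real (norm x * norm y)) \<le> 2 * norm (y - x) / norm y"
        using angle_bound[OF x0 y0] .
      also have "\<dots> \<le> 2 * (e\<^sup>2 / 64) / (e / 4)"
        using dy nylow e by (intro frac_le) auto
      also have "\<dots> = e / 8" using e by (simp add: power2_eq_square field_simps)
      finally have A: "cmod (1 - hinner z y / complex_of_real (norm z * norm y)) \<le> e / 8" using ang by simp
      have B: "\<bar>norm z - norm y\<bar> \<le> e / 2 + e\<^sup>2 / 64" unfolding abs_le_iff using ny1 ny2 nx dy e by linarith
      show ?thesis unfolding pdist_def using False y0 A B d e by simp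
    qed
    show "pdist z y < e \<and> norm y < norm z + e / 2 + e\<^sup>2 / 64 \<and> norm y < 1"
      using pd nyb d e by linarith
  qed
qed

section \<open>Measurability and measure lower bounds\<close>

lemma hinner_meas[measurable]: "(\<lambda>y. hinner z y) \<in> borel_measurable (borel :: ('n::finite) cvec measure)"
  unfolding hinner_def by (intro borel_measurable_continuous_onI continuous_intros)

lemma pdist_meas[measurable]: "(\<lambda>y. pdist z y) \<in> borel_measurable (borel :: ('n::finite) cvec measure)"
  unfolding pdist_def by measurable

lemma Bk_sets[measurable]: "Bk k z \<in> sets (borel :: ('n::finite) cvec measure)"
proof -
  have "Bk k z = unitB \<inter> {y. pdist z y < k * (1 - norm z)}" unfolding Bk_def by auto
  then show ?thesis by simp
qed

lemma Bk_sub: "Bk k z \<subseteq> unitB" unfolding Bk_def by auto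

lemma pball_U: "pball (0::('n::finite) cvec) 4 = unitB"
  unfolding pball_def unitB_def pdist_def by auto

lemma mu_lower:
  assumes S: "S \<in> sets borel" and c: "\<And>y. y \<in> S \<Longrightarrow> c \<le> dens a y"
  shows "ennreal c * emeasure lborel S \<le> emeasure (mu_alpha a) (S :: ('n::finite) cvec set)"
proof -
  have "ennreal c * emeasure lborel S = (\<integral>\<^sup>+ x. ennreal c * indicator S x \<partial>lborel)"
    by (rule nn_integral_cmult_indicator[symmetric]) (use S in simp)
  also have "\<dots> \<le> (\<integral>\<^sup>+ x. ennreal (dens a x) * indicator S x \<partial>lborel)"
    by (intro nn_integral_mono) (auto simp: indicator_def c intro: ennreal_leI)
  also have "\<dots> = emeasure (mu_alpha a) S" using S by (simp add: emeasure_mu)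
  finally show ?thesis .
qed

lemma mu_finite_sub: assumes "a > 0" "S \<subseteq> unitB" "S \<in> sets borel"
  shows "emeasure (mu_alpha a) (S :: ('n::finite) cvec set) < \<infinity>"
proof -
  have "emeasure (mu_alpha a) S \<le> emeasure (mu_alpha a) (unitB :: 'n cvec set)"
    using assms by (intro emeasure_mono) (auto simp: sets_mu)
  then show ?thesis using mu_unitB_finite[OF assms(1)] order_le_less_trans by blast
qed

lemma powr_ge_min: assumes "0 < lo" "lo \<le> u" "u \<le> hi" shows "min (lo powr r) (hi powr r) \<le> u powr (r::real)"
proof (cases "r \<ge> 0")
  case True
  then have "lo powr r \<le> u powr r" using assms by (intro powr_mono2) auto
  then show ?thesis by simp
next
  case False
  then have "hi powr r \<le> u powr r" using assms by (intro powr_mono2') auto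
  then show ?thesis by simp
qed

lemma mu_pos:
  assumes S: "S \<in> sets borel" "S \<subseteq> unitB" and pos: "emeasure lborel S > 0"
  shows "emeasure (mu_alpha a) (S :: ('n::finite) cvec set) > 0"
proof (rule ccontr)
  assume "\<not> ?thesis"
  then have "(\<integral>\<^sup>+ x. ennreal (dens a x) * indicator S x \<partial>lborel) = 0"
    using S by (simp add: emeasure_mu)
  then have "AE x in lborel. ennreal (dens a x) * indicator S x = 0"
    by (subst (asm) nn_integral_0_iff_AE) (use S in auto)
  moreover have "dens a x > 0" if "x \<in> S" for x
  proof -
    have "norm x < 1" using that S by (auto simp: unitB_def)
    then have "0 < 1 - (norm x)\<^sup>2" by (simp add: abs_square_less_1)
    then have p: "0 < (1 - (norm x)\<^sup>2) powr (a - 1)" by simp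
    have xU: "x \<in> unitB" using that S by auto
    have "dens a x = (1 - (norm x)\<^sup>2) powr (a - 1) / measure lborel (unitB :: 'n cvec set)"
      unfolding dens_def using xU by simp
    then show ?thesis using divide_pos_pos[OF p unitB_vol_pos] by simp
  qed
  ultimately have "AE x in lborel. x \<notin> S"
  proof (elim AE_mp, intro AE_I2 impI)
    fix x assume pos: "\<And>x. x \<in> S \<Longrightarrow> 0 < dens a x" and h: "ennreal (dens a x) * indicator S x = 0"
    show "x \<notin> S"
    proof
      assume "x \<in> S"
      then show False using h pos[of x] by (simp add: indicator_def)
    qed
  qed
  then have "emeasure lborel S = 0" using AE_iff_measurable[of S lborel "\<lambda>x. x \<notin> S"] S by auto
  then show False using pos by simp
qed

lemma Bk_lower:
  fixes z :: "('n::finite) cvec"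
  assumes a: "a > 0" and k: "0 < k" "k < 1/2" and z: "z \<in> unitB"
  shows "ennreal (((1 - norm z) / 2) powr (max (a - 1) 0) * (k\<^sup>2 * (1 - norm z)\<^sup>2 / 64) ^ DIM('n cvec))
         \<le> emeasure (mu_alpha a) (Bk k z)"
proof -
  define t where "t = 1 - norm z"
  have nz: "norm z < 1" using z by (simp add: unitB_def)
  have t: "0 < t" "t \<le> 1" unfolding t_def using nz by auto
  define e where "e = k * t"
  have e: "0 < e" "e \<le> t / 2" unfolding e_def using k t by auto
  obtain x where x: "\<And>y. y \<in> ball x (e\<^sup>2 / 64) \<Longrightarrow> pdist z y < e \<and> norm y < norm z + e / 2 + e\<^sup>2 / 64 \<and> norm y < 1"
    using ball_in_pball[OF nz, of e] e t_def by auto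
  define V where "V = measure lborel (unitB :: 'n cvec set)"
  define D where "D = DIM('n cvec)"
  have V: "V > 0" "V = unit_ball_vol D" unfolding V_def D_def using unitB_vol_pos unitB_vol by auto
  have e2: "e\<^sup>2 / 64 \<le> t / 128" using e t by (simp add: power2_eq_square) (smt (verit) mult_left_le_one_le e(1))
  have sub: "ball x (e\<^sup>2 / 64) \<subseteq> Bk k z"
    using x unfolding Bk_def unitB_def e_def t_def by auto
  define c where "c = (t / 2) powr (max (a - 1) 0) / V"
  have dens_lb: "c \<le> dens a y" if y: "y \<in> ball x (e\<^sup>2 / 64)" for y
  proof -
    have ny: "norm y < 1" "norm y < norm z + e / 2 + e\<^sup>2 / 64" using x[OF y] by auto
    have lo: "t / 2 \<le> 1 - (norm y)\<^sup>2"
    proof -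
      have "norm y < norm z + t / 4 + t / 128" using ny(2) e e2 by linarith
      then have "t / 2 \<le> 1 - norm y" using t_def t by linarith
      also have "1 - norm y \<le> 1 - (norm y)\<^sup>2"
        using ny by (simp add: power2_eq_square) (smt (verit) mult_left_le_one_le norm_ge_zero)
      finally show ?thesis .
    qed
    have hi: "1 - (norm y)\<^sup>2 \<le> 1" by simp
    have "min ((t/2) powr (a - 1)) (1 powr (a - 1)) \<le> (1 - (norm y)\<^sup>2) powr (a - 1)"
      using lo hi t by (intro powr_ge_min) auto
    moreover have "(t / 2) powr (max (a - 1) 0) \<le> min ((t/2) powr (a - 1)) (1 powr (a - 1))"
    proof (cases "a - 1 \<ge> 0")
      case True
      have "(t/2) powr (a - 1) \<le> 1 powr (a - 1)" using True t by (intro powr_mono2) auto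
      then show ?thesis using True by simp
    next
      case False
      have "1 powr (a - 1) \<le> (t/2) powr (a - 1)" using False t by (intro powr_mono2') auto
      then show ?thesis using False t by simp
    qed
    ultimately have "(t / 2) powr (max (a - 1) 0) \<le> (1 - (norm y)\<^sup>2) powr (a - 1)" by linarith
    then show ?thesis unfolding c_def dens_def V_def[symmetric] using ny V by (auto simp: unitB_def intro: divide_right_mono)
  qed
  have "ennreal c * emeasure lborel (ball x (e\<^sup>2 / 64)) \<le> emeasure (mu_alpha a) (ball x (e\<^sup>2 / 64))"
    by (intro mu_lower dens_lb) auto
  also have "\<dots> \<le> emeasure (mu_alpha a) (Bk k z)" using sub by (intro emeasure_mono) (auto simp: sets_mu)
  finally have "ennreal c * emeasure lborel (ball x (e\<^sup>2 / 64)) \<le> emeasure (mu_alpha a) (Bk k z)" .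
  moreover have "ennreal c * emeasure lborel (ball x (e\<^sup>2 / 64)) = ennreal ((t / 2) powr (max (a - 1) 0) * (k\<^sup>2 * t\<^sup>2 / 64) ^ D)"
  proof -
    have "emeasure lborel (ball x (e\<^sup>2 / 64)) = ennreal (V * (e\<^sup>2 / 64) ^ D)"
      using V by (simp add: emeasure_ball D_def)
    moreover have "c * (V * (e\<^sup>2 / 64) ^ D) = (t / 2) powr (max (a - 1) 0) * (k\<^sup>2 * t\<^sup>2 / 64) ^ D"
      unfolding c_def e_def using V(1) by (simp add: power_mult_distrib field_simps)
    moreover have "c \<ge> 0" unfolding c_def using V by auto
    ultimately show ?thesis using V by (simp add: ennreal_mult[symmetric])
  qed
  ultimately show ?thesis unfolding t_def D_def by simp
qed

section \<open>Luxemburg norms\<close>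

lemma vnorm_lt:
  assumes "vnorm a p v f < ennreal T"
  shows "\<exists>t. 0 < t \<and> t < T \<and> (\<integral>\<^sup>+ z. ennreal (\<bar>f z / t\<bar> powr p z * v z) \<partial>mu_alpha a) \<le> 1"
proof -
  from assms obtain y where y: "y \<in> {ennreal t | t. t > 0 \<and> (\<integral>\<^sup>+ z. ennreal (\<bar>f z / t\<bar> powr p z * v z) \<partial>mu_alpha a) \<le> 1}" "y < ennreal T"
    unfolding vnorm_def by (auto simp: Inf_less_iff)
  then obtain t where t: "y = ennreal t" "t > 0" "(\<integral>\<^sup>+ z. ennreal (\<bar>f z / t\<bar> powr p z * v z) \<partial>mu_alpha a) \<le> 1" by auto
  then have "t < T" using y(2) by (simp add: ennreal_less_iff)
  then show ?thesis using t by blast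
qed

lemma vnorm_fin:
  assumes "vnorm a p v f < \<infinity>"
  shows "\<exists>t. 0 < t \<and> (\<integral>\<^sup>+ z. ennreal (\<bar>f z / t\<bar> powr p z * v z) \<partial>mu_alpha a) \<le> 1"
proof -
  from assms obtain y where y: "y \<in> {ennreal t | t. t > 0 \<and> (\<integral>\<^sup>+ z. ennreal (\<bar>f z / t\<bar> powr p z * v z) \<partial>mu_alpha a) \<le> 1}"
    unfolding vnorm_def by (auto simp: Inf_less_iff)
  then show ?thesis by auto
qed

lemma mu_unitB_pos: "emeasure (mu_alpha a) (unitB :: ('n::finite) cvec set) > 0"
  by (rule mu_pos) (auto simp: unitB_def emeasure_ball)

lemma Young_simple:
  assumes "q > 1" "a \<ge> 0" "b \<ge> 0"
  shows "a * b \<le> a powr q + b powr (conj_exp q)"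
proof -
  have q': "conj_exp q > 1" "1 / q + 1 / conj_exp q = 1" unfolding conj_exp_def using assms(1)
    by (auto simp: field_simps)
  have "a * b \<le> a powr q / q + b powr (conj_exp q) / conj_exp q"
    using assms q' by (intro Youngs_inequality) auto
  also have "\<dots> \<le> a powr q + b powr (conj_exp q)"
  proof (intro add_mono)
    show "a powr q / q \<le> a powr q" using divide_left_mono[of 1 q "a powr q"] assms by simp
    show "b powr conj_exp q / conj_exp q \<le> b powr conj_exp q"
      using divide_left_mono[of 1 "conj_exp q" "b powr conj_exp q"] q' by simp
  qed
  finally show ?thesis .
qed

lemma N1_pos:
  fixes p w :: "('n::finite) cvec \<Rightarrow> real"
  assumes a: "a > 0" and P: "Plog a p" and W: "weight a w"
  shows "vnorm a p (\<lambda>_. 1) (\<lambda>y. w y powr (1 / p y) * indicator (unitB :: 'n cvec set) y) > 0"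
proof (rule ccontr)
  assume "\<not> ?thesis"
  then have N0: "vnorm a p (\<lambda>_. 1) (\<lambda>y. w y powr (1 / p y) * indicator (unitB :: 'n cvec set) y) = 0" by simp
  obtain p0 where p0: "p0 > 1" "AE z in mu_alpha a. p z \<ge> p0" using P unfolding Plog_def by auto
  have wm[measurable]: "w \<in> borel_measurable borel" and wpos: "\<And>z. w z \<ge> 0" and wae: "AE z in mu_alpha a. w z > 0"
    using W unfolding weight_def by auto
  have small: "(\<integral>\<^sup>+ y. ennreal (w y * indicator unitB y) \<partial>mu_alpha a) \<le> 0 + ennreal e" if e: "e > 0" for e
  proof -
    have "\<exists>t. 0 < t \<and> t < min e 1 \<and>
      (\<integral>\<^sup>+ z. ennreal (\<bar>w z powr (1 / p z) * indicator (unitB :: 'n cvec set) z / t\<bar> powr p z * 1) \<partial>mu_alpha a) \<le> 1"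
      by (rule vnorm_lt) (use N0 e in simp)
    then obtain t where t: "0 < t" "t < min e 1"
      "(\<integral>\<^sup>+ z. ennreal (\<bar>w z powr (1 / p z) * indicator (unitB :: 'n cvec set) z / t\<bar> powr p z * 1) \<partial>mu_alpha a) \<le> 1"
      by blast
    have "(\<integral>\<^sup>+ y. ennreal (w y * indicator unitB y) \<partial>mu_alpha a)
        = (\<integral>\<^sup>+ y. ennreal t * ennreal (w y * indicator unitB y / t) \<partial>mu_alpha a)"
    proof (intro nn_integral_cong)
      fix x
      have "ennreal t * ennreal (w x * indicator unitB x / t) = ennreal (t * (w x * indicator unitB x / t))"
        by (rule ennreal_mult[symmetric]) (use t wpos[of x] in \<open>auto simp: indicator_def\<close>)
      then show "ennreal (w x * indicator unitB x) = ennreal t * ennreal (w x * indicator unitB x / t)"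
        using t by simp
    qed
    also have "\<dots> = ennreal t * (\<integral>\<^sup>+ y. ennreal (w y * indicator unitB y / t) \<partial>mu_alpha a)"
      by (rule nn_integral_cmult) measurable
    also have "(\<integral>\<^sup>+ y. ennreal (w y * indicator unitB y / t) \<partial>mu_alpha a)
        \<le> (\<integral>\<^sup>+ z. ennreal (\<bar>w z powr (1 / p z) * indicator (unitB :: 'n cvec set) z / t\<bar> powr p z * 1) \<partial>mu_alpha a)"
    proof (intro nn_integral_mono_AE, use p0(2) in \<open>elim AE_mp\<close>, intro AE_I2 impI)
      fix y assume py: "p0 \<le> p y"
      show "ennreal (w y * indicator unitB y / t) \<le> ennreal (\<bar>w y powr (1 / p y) * indicator (unitB :: 'n cvec set) y / t\<bar> powr p y * 1)"
      proof (cases "y \<in> unitB \<and> w y > 0")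
        case True
        have pp: "p y > 1" using py p0 by linarith
        have "\<bar>w y powr (1 / p y) * indicator (unitB :: 'n cvec set) y / t\<bar> powr p y = (w y powr (1 / p y) / t) powr p y"
          using True t by simp
        also have "\<dots> = w y / t powr p y" using True t pp by (simp add: powr_divide powr_powr)
        also have "w y / t \<le> w y / t powr p y"
        proof -
          have "t powr p y \<le> t powr 1" using t pp by (intro powr_mono') auto
          then show ?thesis using True t by (intro divide_left_mono) auto
        qed
        ultimately show ?thesis using True by (auto intro!: ennreal_leI)
      next
        case False
        then have "w y * indicator unitB y / t = 0" using wpos[of y] by (auto simp: indicator_def)
        then show ?thesis by (simp only:) simp
      qed
    qed
    also have "ennreal t * 1 \<le> ennreal e" using t by simp
    ultimately have "(\<integral>\<^sup>+ y. ennreal (w y * indicator unitB y) \<partial>mu_alpha a) \<le> ennreal t * 1"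
      using t(3) by (smt (verit) dual_order.trans mult_left_mono zero_le)
    then show ?thesis using \<open>ennreal t * 1 \<le> ennreal e\<close> by simp
  qed
  have "(\<integral>\<^sup>+ y. ennreal (w y * indicator unitB y) \<partial>mu_alpha a) \<le> 0"
    by (rule ennreal_le_epsilon) (use small in auto)
  then have "(\<integral>\<^sup>+ y. ennreal (w y * indicator unitB y) \<partial>mu_alpha a) = 0" by simp
  then have "AE y in mu_alpha a. ennreal (w y * indicator unitB y) = 0"
    by (subst (asm) nn_integral_0_iff_AE) auto
  with wae have "AE y in mu_alpha a. 0 < w y \<and> ennreal (w y * indicator unitB y) = 0"
    by (simp add: AE_conj_iff)
  then have "AE y in mu_alpha a. y \<notin> (unitB :: 'n cvec set)"
    by (rule AE_mp) (auto simp: indicator_def)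
  then have "emeasure (mu_alpha a) (unitB :: 'n cvec set) = 0"
    using AE_iff_measurable[of "unitB" "mu_alpha a" "\<lambda>x. x \<notin> unitB"] by (auto simp: space_mu sets_mu)
  then show False using mu_unitB_pos[of a, where 'n='n] by simp
qed

lemma L1_bound:
  fixes p w :: "('n::finite) cvec \<Rightarrow> real"
  assumes a: "a > 0" and P: "Plog a p" and B: "Bp_class a p w"
  shows "\<exists>C0>0. \<forall>g. g \<in> borel_measurable lborel \<longrightarrow> (\<forall>y. g y \<ge> 0) \<longrightarrow> vnorm a p w g = 1 \<longrightarrow>
      (\<integral>\<^sup>+ y. ennreal (g y) * indicator (unitB::'n cvec set) y \<partial>mu_alpha a) \<le> ennreal C0"
proof -
  obtain p0 where p0: "p0 > 1" "AE z in mu_alpha a. p z \<ge> p0" using P unfolding Plog_def by auto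
  have pm[measurable]: "p \<in> borel_measurable borel" using P unfolding Plog_def by simp
  have W: "weight a w" using B unfolding Bp_class_def by auto
  have wm[measurable]: "w \<in> borel_measurable borel" and wpos: "\<And>z. w z \<ge> 0" and wae: "AE z in mu_alpha a. w z > 0"
    using W unfolding weight_def by auto
  obtain M where M: "\<forall>z\<in>(unitB :: 'n cvec set). \<forall>r. r > 1 - norm z \<longrightarrow>
      (1 / emeasure (mu_alpha a) (pball z r))
       * vnorm a p (\<lambda>_. 1) (\<lambda>y. w y powr (1 / p y) * indicator (pball z r) y)
       * vnorm a (\<lambda>y. conj_exp (p y)) (\<lambda>_. 1)
              (\<lambda>y. w y powr (- 1 / p y) * indicator (pball z r) y)
       \<le> ennreal M" using B unfolding Bp_class_def by auto
  define N1 where "N1 = vnorm a p (\<lambda>_. 1) (\<lambda>y. w y powr (1 / p y) * indicator (unitB :: 'n cvec set) y)"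
  define N2 where "N2 = vnorm a (\<lambda>y. conj_exp (p y)) (\<lambda>_. 1) (\<lambda>y. w y powr (- 1 / p y) * indicator (unitB :: 'n cvec set) y)"
  have "(1 / emeasure (mu_alpha a) (unitB :: 'n cvec set)) * N1 * N2 \<le> ennreal M"
    using M[rule_format, of 0 4] unfolding N1_def N2_def pball_U by (simp add: unitB_def)
  moreover have "N1 > 0" unfolding N1_def by (rule N1_pos[OF a P W])
  moreover have "1 / emeasure (mu_alpha a) (unitB :: 'n cvec set) \<noteq> 0"
    using mu_unitB_finite[OF a, where 'n='n] by simp
  ultimately have "N2 \<noteq> \<infinity>" by (auto simp: ennreal_mult_top top_unique dest!: gr_implies_not_zero)
  then have "N2 < \<infinity>" by (simp add: less_top)
  then obtain s where s: "0 < s" "(\<integral>\<^sup>+ z. ennreal (\<bar>w z powr (- 1 / p z) * indicator (unitB :: 'n cvec set) z / s\<bar> powr conj_exp (p z) * 1) \<partial>mu_alpha a) \<le> 1"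
    unfolding N2_def using vnorm_fin by blast
  show ?thesis
  proof (intro exI[of _ "4 * s"] conjI allI impI)
    show "0 < 4 * s" using s by simp
    fix g :: "'n cvec \<Rightarrow> real"
    assume gm: "g \<in> borel_measurable lborel" and gpos: "\<forall>y. g y \<ge> 0" and gn: "vnorm a p w g = 1"
    have gm'[measurable]: "g \<in> borel_measurable borel" using gm by simp
    obtain t where t: "0 < t" "t < 2" "(\<integral>\<^sup>+ z. ennreal (\<bar>g z / t\<bar> powr p z * w z) \<partial>mu_alpha a) \<le> 1"
      using vnorm_lt[of a p w g 2] gn by auto
    define F where "F y = \<bar>g y / t\<bar> powr p y * w y" for y
    define G where "G y = \<bar>w y powr (- 1 / p y) * indicator (unitB :: 'n cvec set) y / s\<bar> powr conj_exp (p y) * 1" for y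
    have Fm[measurable]: "(\<lambda>y. ennreal (F y)) \<in> borel_measurable (mu_alpha a)" unfolding F_def by measurable
    have Gm[measurable]: "(\<lambda>y. ennreal (G y)) \<in> borel_measurable (mu_alpha a)" unfolding G_def conj_exp_def by measurable
    have pt: "ennreal (g y) * indicator unitB y \<le> ennreal (t * s) * (ennreal (F y) + ennreal (G y))"
      if wy: "w y > 0" and py: "p y \<ge> p0" for y
    proof (cases "y \<in> unitB")
      case True
      have q: "p y > 1" using py p0 by linarith
      define A' where "A' = g y / t * w y powr (1 / p y)"
      define B' where "B' = w y powr (- 1 / p y) / s"
      have A'0: "A' \<ge> 0" unfolding A'_def using gpos t by auto
      have B'0: "B' \<ge> 0" unfolding B'_def using s by auto
      have "A' * B' = g y / (t * s) * (w y powr (1 / p y) * w y powr (- 1 / p y))"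
        unfolding A'_def B'_def by (simp add: field_simps)
      also have "w y powr (1 / p y) * w y powr (- 1 / p y) = 1"
        using wy by (simp add: powr_add[symmetric])
      finally have AB: "A' * B' = g y / (t * s)" by simp
      have "A' powr p y = (g y / t) powr p y * (w y powr (1 / p y)) powr p y"
        unfolding A'_def using gpos t powr_mult[of "g y / t" "w y powr (1 / p y)" "p y"] by simp
      also have "(w y powr (1 / p y)) powr p y = w y" using wy q by (simp add: powr_powr)
      finally have "A' powr p y = F y" unfolding F_def using gpos t by simp
      moreover have "B' powr conj_exp (p y) = G y" unfolding G_def B'_def using True s by simp
      ultimately have "g y / (t * s) \<le> F y + G y" using Young_simple[OF q A'0 B'0] AB by simp
      then have "g y \<le> t * s * (F y + G y)" using t s by (simp add: divide_le_eq mult.commute)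
      moreover have "F y \<ge> 0" "G y \<ge> 0" unfolding F_def G_def using wpos by auto
      ultimately show ?thesis using True t s
        by (simp add: ennreal_mult[symmetric] ennreal_plus[symmetric] del: ennreal_plus)
    qed simp
    have "(\<integral>\<^sup>+ y. ennreal (g y) * indicator (unitB::'n cvec set) y \<partial>mu_alpha a)
        \<le> (\<integral>\<^sup>+ y. ennreal (t * s) * (ennreal (F y) + ennreal (G y)) \<partial>mu_alpha a)"
    proof (intro nn_integral_mono_AE)
      have "AE y in mu_alpha a. w y > 0 \<and> p y \<ge> p0" using wae p0(2) by (simp add: AE_conj_iff)
      then show "AE y in mu_alpha a. ennreal (g y) * indicator (unitB::'n cvec set) y \<le> ennreal (t * s) * (ennreal (F y) + ennreal (G y))"
        by (rule AE_mp) (auto intro!: pt)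
    qed
    also have "\<dots> = ennreal (t * s) * ((\<integral>\<^sup>+ y. ennreal (F y) \<partial>mu_alpha a) + (\<integral>\<^sup>+ y. ennreal (G y) \<partial>mu_alpha a))"
      by (simp add: nn_integral_cmult nn_integral_add)
    also have "\<dots> \<le> ennreal (t * s) * (1 + 1)"
      using t(3) s(2) unfolding F_def G_def by (intro mult_left_mono add_mono) auto
    also have "\<dots> = ennreal (t * s) * ennreal 2" by simp
    also have "\<dots> = ennreal (2 * t * s)" using t s by (subst ennreal_mult[symmetric]) (auto simp: mult_ac)
    also have "\<dots> \<le> ennreal (4 * s)" using t s by (intro ennreal_leI) auto
    finally show "(\<integral>\<^sup>+ y. ennreal (g y) * indicator (unitB::'n cvec set) y \<partial>mu_alpha a) \<le> ennreal (4 * s)" .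
  qed
qed



section \<open>Jensen-type and exponent estimates\<close>

lemma tangent_powr:
  fixes x A q :: real
  assumes q: "q \<ge> 1" and A: "A > 0" and x: "x \<ge> 0"
  shows "q * A powr (q - 1) * x \<le> x powr q + (q - 1) * A powr q"
proof (cases "x = 0")
  case True
  then show ?thesis using q A by simp
next
  case False
  then have xp: "x > 0" using x by simp
  have "q * A powr (q - 1) * (x - A) \<le> x powr q - A powr q"
  proof (rule convex_on_imp_above_tangent[where A = "{0<..}"])
    show "convex_on {0<..} (\<lambda>x. x powr q)" using q by (rule powr_convex)
    show "connected {0::real<..}" by simp
    show "A \<in> interior {0<..}" using A by (simp add: interior_open)
    show "x \<in> {0<..}" using xp by simp
    show "((\<lambda>x. x powr q) has_field_derivative q * A powr (q - 1)) (at A within {0<..})"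
      using has_real_derivative_powr[OF A, of q] by (rule has_field_derivative_at_within)
  qed
  moreover have "A powr (q - 1) * A = A powr q" using A by (simp add: powr_mult_base mult.commute)
  moreover have "q * A powr (q - 1) * (x - A) = q * A powr (q - 1) * x - q * (A powr (q - 1) * A)"
    by (simp add: algebra_simps)
  ultimately have h1: "q * A powr (q - 1) * x - q * A powr q \<le> x powr q - A powr q"
    by simp
  have "q * A powr q - A powr q = (q - 1) * A powr q" by (simp add: algebra_simps)
  then show ?thesis using h1 by linarith
qed

lemma jensen_mu:
  fixes g :: "('n::finite) cvec \<Rightarrow> real" and S :: "'n cvec set"
  assumes S: "S \<in> sets borel" and mS: "emeasure (mu_alpha a) S = ennreal m" "m > 0"
    and gm: "g \<in> borel_measurable borel" and gpos: "\<And>y. g y \<ge> 0"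
    and I: "(\<integral>\<^sup>+ y. ennreal (g y) * indicator S y \<partial>mu_alpha a) = ennreal I" "I \<ge> 0"
    and q: "q \<ge> 1"
  shows "ennreal ((I / m) powr q * m) \<le> (\<integral>\<^sup>+ y. ennreal (g y powr q) * indicator S y \<partial>mu_alpha a)"
proof (cases "I = 0")
  case True
  then show ?thesis by simp
next
  case False
  define A where "A = I / m"
  have A: "A > 0" unfolding A_def using False I(2) mS(2) by simp
  define c where "c = (q - 1) * A powr q"
  have c: "c \<ge> 0" unfolding c_def using q by simp
  define X where "X = (\<integral>\<^sup>+ y. ennreal (g y powr q) * indicator S y \<partial>mu_alpha a)"
  have "ennreal (q * A powr q * m) = ennreal (q * A powr (q - 1)) * ennreal I"
  proof -
    have "A powr (q - 1) * A = A powr q" using A by (simp add: powr_mult_base mult.commute)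
    then have "q * A powr q * m = q * A powr (q - 1) * I" unfolding A_def using mS(2) by (simp add: field_simps)
    then show ?thesis using q A I(2) by (simp add: ennreal_mult[symmetric] mult.assoc)
  qed
  also have "\<dots> = (\<integral>\<^sup>+ y. ennreal (q * A powr (q - 1)) * (ennreal (g y) * indicator S y) \<partial>mu_alpha a)"
    unfolding I(1)[symmetric] by (rule nn_integral_cmult[symmetric]) (use gm S in measurable)
  also have "\<dots> \<le> (\<integral>\<^sup>+ y. (ennreal (g y powr q) + ennreal c) * indicator S y \<partial>mu_alpha a)"
  proof (intro nn_integral_mono)
    fix y
    have "q * A powr (q - 1) * g y \<le> g y powr q + c" unfolding c_def using tangent_powr[OF q A gpos[of y]] .
    then have "ennreal (q * A powr (q - 1)) * ennreal (g y) \<le> ennreal (g y powr q) + ennreal c"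
      using q A gpos[of y] c by (simp add: ennreal_mult[symmetric] ennreal_plus[symmetric] del: ennreal_plus)
    then show "ennreal (q * A powr (q - 1)) * (ennreal (g y) * indicator S y) \<le> (ennreal (g y powr q) + ennreal c) * indicator S y"
      by (auto simp: indicator_def)
  qed
  also have "\<dots> = X + ennreal c * emeasure (mu_alpha a) S"
    unfolding X_def distrib_right using S gm
    by (subst nn_integral_add) (auto simp: nn_integral_cmult_indicator sets_mu)
  also have "\<dots> = X + ennreal (c * m)" using mS c by (simp add: ennreal_mult)
  finally have h: "ennreal (q * A powr q * m) \<le> X + ennreal (c * m)" .
  have "ennreal (q * A powr q * m) = ennreal (A powr q * m) + ennreal (c * m)"
    unfolding c_def using A mS(2) q by (simp add: ennreal_plus[symmetric] del: ennreal_plus) (simp add: algebra_simps)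
  with h have "ennreal (c * m) + ennreal (A powr q * m) \<le> ennreal (c * m) + X" by (simp add: add.commute)
  then have "ennreal (A powr q * m) \<le> X" by (simp add: ennreal_add_left_cancel_le)
  then show ?thesis unfolding X_def A_def .
qed

lemma pdist_nonneg: "pdist z y \<ge> 0" unfolding pdist_def by auto

lemma ln_e_bound:
  fixes d r c cc :: real
  assumes "0 < d" "d < r" "c \<le> cc" "0 \<le> cc"
  shows "c / ln (exp 1 + 1 / d) \<le> cc / ln (exp 1 + 1 / r)"
proof -
  have r: "r > 0" using assms by simp
  have L1: "ln (exp 1 + 1 / r) \<ge> 1"
  proof -
    have "(1::real) = ln (exp 1)" by simp
    also have "\<dots> \<le> ln (exp 1 + 1 / r)" using r by (intro ln_mono) auto
    finally show ?thesis .
  qed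
  have "1 / r \<le> 1 / d" using assms by (intro divide_left_mono) auto
  then have L2: "ln (exp 1 + 1 / r) \<le> ln (exp 1 + 1 / d)" using r by (intro ln_mono) (auto intro: add_pos_nonneg)
  have "c / ln (exp 1 + 1 / d) \<le> cc / ln (exp 1 + 1 / d)" using assms L1 L2 by (intro divide_right_mono) auto
  also have "\<dots> \<le> cc / ln (exp 1 + 1 / r)" using assms L1 L2 by (intro divide_left_mono) auto
  finally show ?thesis .
qed

lemma ln_e_ge: fixes r :: real assumes "0 < r" "r \<le> 1" shows "ln (exp 1 + 1 / r) \<ge> 1" "ln (exp 1 + 1 / r) \<ge> ln (1 / r)"
proof -
  have "(1::real) = ln (exp 1)" by simp
  also have "\<dots> \<le> ln (exp 1 + 1 / r)" using assms by (intro ln_mono) auto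
  finally show "ln (exp 1 + 1 / r) \<ge> 1" .
  show "ln (exp 1 + 1 / r) \<ge> ln (1 / r)" using assms by (intro ln_mono) auto
qed

lemma AE_exists:
  assumes "AE y in mu_alpha a. P y" "S \<in> sets borel" "emeasure (mu_alpha a) S > 0"
  shows "\<exists>y\<in>S. P y"
proof (rule ccontr)
  assume "\<not> ?thesis"
  then have "AE y in mu_alpha a. y \<notin> S" using assms(1) by (auto elim!: AE_mp)
  then have "emeasure (mu_alpha a) S = 0"
    using AE_iff_measurable[of S "mu_alpha a" "\<lambda>x. x \<notin> S"] assms(2) by (auto simp: space_mu sets_mu)
  then show False using assms(3) by simp
qed

lemma p_nonneg:
  fixes p :: "('n::finite) cvec \<Rightarrow> real"
  assumes P: "Plog a p" and z: "z \<in> unitB"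
  shows "p z \<ge> 0"
proof -
  obtain p0 where p0: "p0 > 1" "AE z in mu_alpha a. p z \<ge> p0" using P unfolding Plog_def by auto
  obtain c where c: "\<forall>z\<in>(unitB :: 'n cvec set). \<forall>y\<in>unitB. z \<noteq> y \<longrightarrow> \<bar>p z - p y\<bar> \<le> c / ln (exp 1 + 1 / pdist z y)"
    using P unfolding Plog_def by auto
  define cc where "cc = max c 0"
  have nz: "norm z < 1" using z by (simp add: unitB_def)
  define e where "e = min (1 - norm z) (exp (- cc / p0))"
  have e: "0 < e" "e \<le> 1 - norm z" unfolding e_def using nz by auto
  obtain x where x: "\<And>y. y \<in> ball x (e\<^sup>2 / 64) \<Longrightarrow> pdist z y < e \<and> norm y < norm z + e / 2 + e\<^sup>2 / 64 \<and> norm y < 1"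
    using ball_in_pball[OF nz e] by blast
  have Ssub: "ball x (e\<^sup>2 / 64) \<subseteq> unitB" using x by (auto simp: unitB_def)
  have "emeasure lborel (ball x (e\<^sup>2 / 64)) = ennreal (unit_ball_vol (DIM('n cvec)) * (e\<^sup>2 / 64) ^ DIM('n cvec))"
    by (rule emeasure_ball) simp
  moreover have "unit_ball_vol (DIM('n cvec)) * (e\<^sup>2 / 64) ^ DIM('n cvec) > 0" using e(1) by simp
  ultimately have "emeasure lborel (ball x (e\<^sup>2 / 64)) > 0" by simp
  then have "emeasure (mu_alpha a) (ball x (e\<^sup>2 / 64)) > 0"
    using Ssub by (intro mu_pos) auto
  then have "\<exists>y\<in>ball x (e\<^sup>2 / 64). p y \<ge> p0" by (intro AE_exists[OF p0(2)]) auto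
  then obtain y where y: "y \<in> ball x (e\<^sup>2 / 64)" "p y \<ge> p0" by blast
  show ?thesis
  proof (cases "y = z")
    case True
    then show ?thesis using y p0 by simp
  next
    case False
    have yU: "y \<in> unitB" using y Ssub by auto
    have "pdist z y \<noteq> 0" using pdist_zero[of z y] False by metis
    then have d: "0 < pdist z y" "pdist z y < e" using x[OF y(1)] pdist_nonneg[of z y] by linarith+
    have "\<bar>p z - p y\<bar> \<le> c / ln (exp 1 + 1 / pdist z y)" by (rule c[rule_format, OF z yU False[symmetric]])
    also have "\<dots> \<le> cc / ln (exp 1 + 1 / e)" using d unfolding cc_def by (intro ln_e_bound) auto
    also have "\<dots> \<le> p0"
    proof -
      have e1: "e \<le> 1" using e norm_ge_zero[of z] by linarith
      have "cc / p0 \<le> ln (1 / e)"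
      proof -
        have "e \<le> exp (- cc / p0)" unfolding e_def by simp
        then have "ln e \<le> ln (exp (- cc / p0))" using e by (intro ln_mono) auto
        then have "ln e \<le> - cc / p0" by simp
        moreover have "ln (1 / e) = - ln e" using e by (simp add: ln_div)
        ultimately show ?thesis by linarith
      qed
      also have "\<dots> \<le> ln (exp 1 + 1 / e)" using ln_e_ge[OF e(1) e1] by simp
      finally have "cc \<le> p0 * ln (exp 1 + 1 / e)" using p0 by (simp add: divide_le_eq mult.commute)
      moreover have "ln (exp 1 + 1 / e) > 0" using ln_e_ge[OF e(1) e1] by simp
      ultimately show ?thesis by (simp add: divide_le_eq)
    qed
    finally show ?thesis using y p0 by linarith
  qed
qed

theorem mainTheorem15:
  fixes p w :: "('n::finite) cvec \<Rightarrow> real" and \<alpha> k :: real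
  assumes "\<alpha> > 0" and "Plog \<alpha> p" and "0 < k" and "k < 1/2" and "Bp_class \<alpha> p w"
  shows "\<exists>C > 0. \<forall>g :: 'n cvec \<Rightarrow> real.
           g \<in> borel_measurable lborel \<longrightarrow> (\<forall>y. g y \<ge> 0) \<longrightarrow> vnorm \<alpha> p w g = 1 \<longrightarrow>
           (\<forall>z\<in>unitB. Rk \<alpha> k g z < \<infinity> \<and>
              ennreal (enn2real (Rk \<alpha> k g z) powr p z)
                \<le> ennreal C * (Rk \<alpha> k (\<lambda>y. g y powr p y) z + 1))"
proof -
  note a = assms(1) and P = assms(2) and k = assms(3,4) and B = assms(5)
  obtain C0 where C0: "C0 > 0" and C0b: "\<And>g. g \<in> borel_measurable lborel \<Longrightarrow> (\<forall>y. g y \<ge> 0) \<Longrightarrow> vnorm \<alpha> p w g = 1 \<Longrightarrow>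
      (\<integral>\<^sup>+ y. ennreal (g y) * indicator (unitB::'n cvec set) y \<partial>mu_alpha \<alpha>) \<le> ennreal C0"
    using L1_bound[OF a P B] by blast
  obtain p0 where p0: "p0 > 1" "AE z in mu_alpha \<alpha>. p z \<ge> p0" using P unfolding Plog_def by auto
  obtain cP where cP: "\<forall>z\<in>(unitB :: 'n cvec set). \<forall>y\<in>unitB. z \<noteq> y \<longrightarrow> \<bar>p z - p y\<bar> \<le> cP / ln (exp 1 + 1 / pdist z y)"
    using P unfolding Plog_def by auto
  define cc where "cc = max cP 0"
  have cc: "cc \<ge> 0" "cP \<le> cc" unfolding cc_def by auto
  define D where "D = DIM('n cvec)"
  define \<beta> where "\<beta> = max (\<alpha> - 1) 0"
  have \<beta>: "\<beta> \<ge> 0" unfolding \<beta>_def by simp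
  define N where "N = \<beta> + 2 * real D"
  have N: "N \<ge> 0" unfolding N_def using \<beta> by simp
  define Lc where "Lc = \<bar>ln C0\<bar> + \<beta> * ln 2 + real D * \<bar>ln (k\<^sup>2 / 64)\<bar>"
  have Lc: "Lc \<ge> 0" unfolding Lc_def using \<beta> by simp
  define E where "E = exp (cc * (Lc + N))"
  have E1: "E \<ge> 1" unfolding E_def using cc Lc N by simp
  show ?thesis
  proof (intro exI[of _ E] conjI allI impI ballI)
    show "E > 0" unfolding E_def by simp
    fix g :: "'n cvec \<Rightarrow> real" and z :: "'n cvec"
    assume gm: "g \<in> borel_measurable lborel" and gpos: "\<forall>y. g y \<ge> 0" and gn: "vnorm \<alpha> p w g = 1" and z: "z \<in> unitB"
    have gm'[measurable]: "g \<in> borel_measurable borel" using gm by simp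
    have pm[measurable]: "p \<in> borel_measurable borel" using P unfolding Plog_def by simp
    have nz: "norm z < 1" using z by (simp add: unitB_def)
    define t where "t = 1 - norm z"
    have t: "0 < t" "t \<le> 1" unfolding t_def using nz by auto
    have kt: "0 < k * t" "k * t \<le> 1" using k t by (auto simp: mult_le_one)
    define Bz where "Bz = Bk k z"
    have Bz[measurable]: "Bz \<in> sets borel" unfolding Bz_def by simp
    have BzU: "Bz \<subseteq> unitB" unfolding Bz_def by (rule Bk_sub)
    have mfin: "emeasure (mu_alpha \<alpha>) Bz < \<infinity>" using mu_finite_sub[OF a BzU Bz] .
    define m where "m = enn2real (emeasure (mu_alpha \<alpha>) Bz)"
    have mEq: "emeasure (mu_alpha \<alpha>) Bz = ennreal m" unfolding m_def using mfin by (simp add: less_top)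
    define mlow where "mlow = (t / 2) powr \<beta> * (k\<^sup>2 * t\<^sup>2 / 64) ^ D"
    have mlow: "mlow > 0" unfolding mlow_def using t k by simp
    have "ennreal mlow \<le> ennreal m"
      using Bk_lower[OF a k z] unfolding mlow_def \<beta>_def D_def t_def Bz_def[symmetric] mEq .
    then have m_ge: "mlow \<le> m" using mlow by (simp add: ennreal_le_iff2)
    have m: "m > 0" using m_ge mlow by linarith
    define Ig where "Ig = (\<integral>\<^sup>+ y. ennreal (g y) * indicator Bz y \<partial>mu_alpha \<alpha>)"
    have "Ig \<le> (\<integral>\<^sup>+ y. ennreal (g y) * indicator (unitB::'n cvec set) y \<partial>mu_alpha \<alpha>)"
      unfolding Ig_def using BzU by (intro nn_integral_mono) (auto simp: indicator_def)
    also have "\<dots> \<le> ennreal C0" using C0b[OF gm gpos gn] .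
    finally have IgC: "Ig \<le> ennreal C0" .
    define I where "I = enn2real Ig"
    have IgEq: "Ig = ennreal I" unfolding I_def using IgC by (metis ennreal_enn2real ennreal_less_top less_top neq_top_trans)
    have I0: "I \<ge> 0" unfolding I_def by simp
    have IC0: "I \<le> C0" using IgC IgEq C0 by (simp add: ennreal_le_iff2)
    define A where "A = I / m"
    have A0: "A \<ge> 0" unfolding A_def using I0 m by simp
    have RkEq: "Rk \<alpha> k g z = ennreal A"
      unfolding Rk_def Bz_def[symmetric] Ig_def[symmetric] IgEq mEq A_def using I0 m by (simp add: divide_ennreal)
    define Xp where "Xp = (\<integral>\<^sup>+ y. ennreal (g y powr p y) * indicator Bz y \<partial>mu_alpha \<alpha>)"
    have RkpEq: "Rk \<alpha> k (\<lambda>y. g y powr p y) z = Xp / ennreal m"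
      unfolding Rk_def Bz_def[symmetric] Xp_def mEq by simp
    define \<Delta> where "\<Delta> = cc / ln (exp 1 + 1 / (k * t))"
    have Lpos: "ln (exp 1 + 1 / (k * t)) \<ge> 1" using ln_e_ge[OF kt] by simp
    have \<Delta>0: "\<Delta> \<ge> 0" unfolding \<Delta>_def using cc Lpos by simp
    have hpB: "p y \<ge> p z - \<Delta>" if y: "y \<in> Bz" for y
    proof (cases "y = z")
      case True
      then show ?thesis using \<Delta>0 by simp
    next
      case False
      have yU: "y \<in> unitB" using y BzU by auto
      have "pdist z y \<noteq> 0" using pdist_zero[of z y] False by metis
      moreover have "pdist z y < k * t" using y unfolding Bz_def Bk_def t_def by simp
      ultimately have d: "0 < pdist z y" "pdist z y < k * t" using pdist_nonneg[of z y] by linarith+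
      have "\<bar>p z - p y\<bar> \<le> cP / ln (exp 1 + 1 / pdist z y)"
        by (rule cP[rule_format, OF z yU False[symmetric]])
      also have "\<dots> \<le> \<Delta>" unfolding \<Delta>_def using d cc by (intro ln_e_bound) auto
      finally show ?thesis by linarith
    qed
    define q where "q = max p0 (p z - \<Delta>)"
    have q1: "q \<ge> 1" unfolding q_def using p0 by simp
    have qAE: "AE y in mu_alpha \<alpha>. y \<in> Bz \<longrightarrow> p y \<ge> q"
      using p0(2) by (rule AE_mp) (auto simp: q_def intro!: hpB)
    have J: "ennreal (A powr q * m) \<le> (\<integral>\<^sup>+ y. ennreal (g y powr q) * indicator Bz y \<partial>mu_alpha \<alpha>)"
      unfolding A_def by (rule jensen_mu[OF Bz mEq m gm' _ _ I0 q1]) (use gpos Ig_def IgEq in auto)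
    also have "\<dots> \<le> (\<integral>\<^sup>+ y. (ennreal (g y powr p y) + 1) * indicator Bz y \<partial>mu_alpha \<alpha>)"
    proof (intro nn_integral_mono_AE)
      show "AE y in mu_alpha \<alpha>. ennreal (g y powr q) * indicator Bz y \<le> (ennreal (g y powr p y) + 1) * indicator Bz y"
      proof (rule AE_mp[OF qAE], intro AE_I2 impI)
        fix y assume h: "y \<in> Bz \<longrightarrow> q \<le> p y"
        show "ennreal (g y powr q) * indicator Bz y \<le> (ennreal (g y powr p y) + 1) * indicator Bz y"
        proof (cases "y \<in> Bz")
          case True
          then have qp: "q \<le> p y" using h by simp
          have "g y powr q \<le> g y powr p y + 1"
          proof (cases "g y \<le> 1")
            case True
            then have "g y powr q \<le> 1" using gpos q1 by (intro powr_le1) auto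
            then show ?thesis by (smt (verit) powr_ge_zero)
          next
            case False
            then have "g y powr q \<le> g y powr p y" using qp by (intro powr_mono) auto
            then show ?thesis by simp
          qed
          then have h1: "ennreal (g y powr q) \<le> ennreal (g y powr p y + 1)" by (rule ennreal_leI)
          have h2: "ennreal (g y powr p y) + 1 = ennreal (g y powr p y + 1)"
            by (subst ennreal_plus) auto
          have "ennreal (g y powr q) \<le> ennreal (g y powr p y) + 1"
            unfolding h2 by (rule h1)
          then show ?thesis using True by simp
        qed simp
      qed
    qed
    also have "\<dots> = Xp + emeasure (mu_alpha \<alpha>) Bz"
      unfolding Xp_def distrib_right
      by (subst nn_integral_add) (auto simp: sets_mu)
    also have "\<dots> = Xp + ennreal m" using mEq by simp
    finally have J2: "ennreal (A powr q) * ennreal m \<le> Xp + ennreal m"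
      using m A0 by (simp add: ennreal_mult)
    have RA: "ennreal (A powr q) \<le> Rk \<alpha> k (\<lambda>y. g y powr p y) z + 1"
    proof -
      have "ennreal (A powr q) = ennreal (A powr q) * ennreal m / ennreal m"
        using m by (simp add: mult_divide_eq_ennreal)
      also have "\<dots> \<le> (Xp + ennreal m) / ennreal m" by (rule divide_right_mono_ennreal[OF J2])
      also have "\<dots> = Xp / ennreal m + 1" using m by (simp add: add_divide_distrib_ennreal)
      finally show ?thesis unfolding RkpEq .
    qed
    have pz0: "p z \<ge> 0" by (rule p_nonneg[OF P z])
    show "Rk \<alpha> k g z < \<infinity>" unfolding RkEq by simp
      have eA: "enn2real (Rk \<alpha> k g z) = A" unfolding RkEq using A0 by simp
      show "ennreal (enn2real (Rk \<alpha> k g z) powr p z) \<le> ennreal E * (Rk \<alpha> k (\<lambda>y. g y powr p y) z + 1)"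
        unfolding eA
      proof (cases "A \<le> 1")
        case True
        have "A powr p z \<le> 1" using True A0 pz0 by (intro powr_le1) auto
        then have "ennreal (A powr p z) \<le> 1" by simp
        also have "(1::ennreal) \<le> ennreal E * (Rk \<alpha> k (\<lambda>y. g y powr p y) z + 1)"
        proof -
          have "(1::ennreal) \<le> ennreal E" using E1 by simp
          moreover have "(1::ennreal) \<le> Rk \<alpha> k (\<lambda>y. g y powr p y) z + 1" by simp
          ultimately show ?thesis using mult_mono[of 1 "ennreal E" 1 "Rk \<alpha> k (\<lambda>y. g y powr p y) z + 1"] by simp
        qed
        finally show "ennreal (A powr p z) \<le> ennreal E * (Rk \<alpha> k (\<lambda>y. g y powr p y) z + 1)" .
      next
        case False
        then have A1: "A > 1" by simp
        have "A powr p z \<le> A powr (q + \<Delta>)" using A1 unfolding q_def by (intro powr_mono) auto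
        also have "\<dots> = A powr q * A powr \<Delta>" by (simp add: powr_add)
        also have "A powr \<Delta> \<le> E"
        proof -
          have "A \<le> C0 / mlow"
          proof -
            have "A \<le> C0 / m" unfolding A_def using IC0 m by (intro divide_right_mono) auto
            also have "\<dots> \<le> C0 / mlow" using C0 m_ge mlow by (intro divide_left_mono) auto
            finally show ?thesis .
          qed
          then have lnA: "ln A \<le> ln (C0 / mlow)" using A1 by (intro ln_mono) auto
          have lnm: "ln (C0 / mlow) = ln C0 + \<beta> * ln 2 - real D * ln (k\<^sup>2 / 64) + N * ln (1 / t)"
          proof -
            have "ln mlow = \<beta> * ln (t / 2) + real D * ln (k\<^sup>2 * t\<^sup>2 / 64)"
              unfolding mlow_def using t k by (simp add: ln_mult ln_powr ln_realpow)
            moreover have "ln (t / 2) = ln t - ln 2" using t by (simp add: ln_div)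
            moreover have "ln (k\<^sup>2 * t\<^sup>2 / 64) = ln (k\<^sup>2 / 64) + 2 * ln t"
              using t k by (simp add: ln_mult ln_div ln_realpow)
            moreover have "ln (1 / t) = - ln t" using t by (simp add: ln_div)
            moreover have "ln (C0 / mlow) = ln C0 - ln mlow" using C0 mlow by (simp add: ln_div)
            ultimately show ?thesis unfolding N_def by (simp add: algebra_simps)
          qed
          have lt: "ln (1 / t) \<ge> 0" using t by simp
          have "ln (C0 / mlow) \<le> Lc + N * ln (1 / t)"
          proof -
            have a1: "ln C0 \<le> \<bar>ln C0\<bar>" by simp
            have "- ln (k\<^sup>2 / 64) \<le> \<bar>ln (k\<^sup>2 / 64)\<bar>" by simp
            then have a2: "real D * (- ln (k\<^sup>2 / 64)) \<le> real D * \<bar>ln (k\<^sup>2 / 64)\<bar>"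
              by (intro mult_left_mono) auto
            show ?thesis unfolding lnm Lc_def using a1 a2 by (simp add: algebra_simps)
          qed
          define L where "L = ln (exp 1 + 1 / (k * t))"
          have L1: "L \<ge> 1" unfolding L_def using Lpos .
          have Lt: "L \<ge> ln (1 / t)"
          proof -
            have "ln (1 / t) \<le> ln (1 / (k * t))" using t k by (intro ln_mono) (auto simp: divide_le_eq mult_le_one)
            also have "\<dots> \<le> L" unfolding L_def using ln_e_ge[OF kt] by simp
            finally show ?thesis .
          qed
          have "\<Delta> * ln A \<le> \<Delta> * (Lc + N * ln (1 / t))"
            using lnA \<open>ln (C0 / mlow) \<le> Lc + N * ln (1 / t)\<close> \<Delta>0 by (intro mult_left_mono) auto
          also have "\<dots> = cc * (Lc / L) + cc * N * (ln (1 / t) / L)"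
            unfolding \<Delta>_def L_def[symmetric] by (simp add: algebra_simps add_divide_distrib)
          also have "\<dots> \<le> cc * Lc + cc * N * 1"
          proof (intro add_mono mult_left_mono)
            have "Lc * 1 \<le> Lc * L" using Lc L1 by (intro mult_left_mono) auto
            then show "Lc / L \<le> Lc" using L1 by (simp add: divide_le_eq)
            show "ln (1 / t) / L \<le> 1" using Lt L1 by simp
          qed (use cc N in auto)
          finally have "\<Delta> * ln A \<le> cc * (Lc + N)" by (simp add: algebra_simps)
          then have "exp (\<Delta> * ln A) \<le> E" unfolding E_def by simp
          moreover have "A powr \<Delta> = exp (\<Delta> * ln A)" using A1 by (simp add: powr_def mult.commute)
          ultimately show ?thesis by simp
        qed
        then have "A powr q * A powr \<Delta> \<le> A powr q * E" by (intro mult_left_mono) auto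
        finally have "ennreal (A powr p z) \<le> ennreal (A powr q) * ennreal E"
          using E1 by (simp add: ennreal_mult[symmetric])
        also have "\<dots> \<le> (Rk \<alpha> k (\<lambda>y. g y powr p y) z + 1) * ennreal E" using RA by (intro mult_right_mono) auto
        finally show "ennreal (A powr p z) \<le> ennreal E * (Rk \<alpha> k (\<lambda>y. g y powr p y) z + 1)" by (simp add: mult.commute)
      qed
  qed
qed

end
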